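(* Let $\mathcal{A}$ be a dual Banach algebra and let $\varphi$ be a weak$^*$-continuous character on $\mathcal{A}$. If $\mathcal{A}$ is Johnson pseudo-Connes amenable, then $\mathcal{A}$ is $\varphi$-Connes amenable.
   Context: A dual Banach algebra is a Banach algebra $\mathcal{A}$ together with a closed $\mathcal{A}$-submodule $\mathcal{A}_*$ of $\mathcal{A}^*$ such that $\mathcal{A}=(\mathcal{A}_* )^*$. For a bimodule $E$, $\sigma wc(E)$ is the set of $x\in E$ for which $a\mapsto a\cdot x$, $a\mapsto x\cdot a$ are weak$^*$-weak continuous. For a weak$^*$-continuous character $\varphi$, $\mathcal{A}$ is $\varphi$-Connes amenable if there is a bounded linear functional $m$ on $\sigma wc(\mathcal{A}^* )$ with $m(\varphi)=1$ and $m(f\cdot a)=\varphi(a)m(f)$ for all $a\in\mathcal{A}$, $f\in\sigma wc(\mathcal{A}^* )$. $\mathcal{A}\hat{\otimes}\mathcal{A}$ has actions $a\cdot(b\otimes c)=ab\otimes c$, $(b\otimes c)\cdot a=b\otimes ca$; duals carry the dual actions. $\pi_{\mathcal{A}}$ is the multiplication map $\mathcal{A}\hat{\otimes}\mathcal{A}\to\mathcal{A}$, $i_{\mathcal{A}_*}:\mathcal{A}_*\hookrightarrow\mathcal{A}^*$ the canonical embedding. $\mathcal{A}$ is Johnson pseudo-Connes amenable if there is a (not necessarily bounded) net $(m_\alpha)$ in $(\mathcal{A}\hat{\otimes}\mathcal{A})^{**}$ with $\langle T,a\cdot m_\alpha\rangle=\langle T,m_\alpha\cdot a\rangle$ for all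 $a\in\mathcal{A}$, $T\in\sigma wc((\mathcal{A}\hat{\otimes}\mathcal{A})^* )$, $\alpha$, and $i_{\mathcal{A}_*}^*\pi_{\mathcal{A}}^{**}(m_\alpha)a\to a$ for every $a\in\mathcal{A}$. *)

theory Defs
  imports "HOL-Analysis.Analysis"
begin

class complex_banach_algebra = real_normed_algebra + banach +
  fixes scaleC :: "complex \<Rightarrow> 'a \<Rightarrow> 'a"
  assumes scaleC_add_right: "scaleC c (x + y) = scaleC c x + scaleC c y"
    and scaleC_add_left: "scaleC (c + d) x = scaleC c x + scaleC d x"
    and scaleC_scaleC: "scaleC c (scaleC d x) = scaleC (c * d) x"
    and scaleC_one: "scaleC 1 x = x"
    and scaleC_of_real: "scaleC (complex_of_real r) x = scaleR r x"
    and norm_scaleC: "norm (scaleC c x) = cmod c * norm x"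
    and mult_scaleC_left: "scaleC c x * y = scaleC c (x * y)"
    and mult_scaleC_right: "x * scaleC c y = scaleC c (x * y)"

definition clinear_functional :: "('a::complex_banach_algebra \<Rightarrow> complex) \<Rightarrow> bool" where
  "clinear_functional f \<longleftrightarrow> (\<forall>x y. f (x + y) = f x + f y) \<and> (\<forall>c x. f (scaleC c x) = c * f x)"

definition dual_space :: "('a::complex_banach_algebra \<Rightarrow> complex) set" where
  "dual_space = {f. clinear_functional f \<and> (\<exists>K. \<forall>x. cmod (f x) \<le> K * norm x)}"

definition dual_norm :: "('a::complex_banach_algebra \<Rightarrow> complex) \<Rightarrow> real" where
  "dual_norm f = Sup {cmod (f x) | x. norm x \<le> 1}"

text \<open>Dual module actions on A^*:  <x, f.a> = <a.x, f>,  <x, a.f> = <x.a, f>.\<close>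

definition fact_r :: "('a::complex_banach_algebra \<Rightarrow> complex) \<Rightarrow> 'a \<Rightarrow> ('a \<Rightarrow> complex)" where
  "fact_r f a = (\<lambda>x. f (a * x))"

definition fact_l :: "'a::complex_banach_algebra \<Rightarrow> ('a \<Rightarrow> complex) \<Rightarrow> ('a \<Rightarrow> complex)" where
  "fact_l a f = (\<lambda>x. f (x * a))"

text \<open>Apre plays the role of the predual A_*: a norm-closed A-submodule of A^*
  such that the canonical map A -> (A_*)^*, a |-> (f |-> f a), is a surjective
  isometry.\<close>

definition dual_Banach_algebra :: "('a::complex_banach_algebra \<Rightarrow> complex) set \<Rightarrow> bool" where
  "dual_Banach_algebra Apre \<longleftrightarrow>
     Apre \<subseteq> dual_space
   \<and> (\<lambda>_. 0) \<in> Apre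
   \<and> (\<forall>f\<in>Apre. \<forall>g\<in>Apre. (\<lambda>x. f x + g x) \<in> Apre)
   \<and> (\<forall>f\<in>Apre. \<forall>c. (\<lambda>x. c * f x) \<in> Apre)
   \<and> (\<forall>f\<in>Apre. \<forall>a. fact_r f a \<in> Apre \<and> fact_l a f \<in> Apre)
   \<and> (\<forall>f\<in>dual_space. (\<forall>e>0. \<exists>g\<in>Apre. dual_norm (\<lambda>x. f x - g x) < e) \<longrightarrow> f \<in> Apre)
   \<and> (\<forall>a. norm a = Sup {cmod (f a) | f. f \<in> Apre \<and> dual_norm f \<le> 1})
   \<and> (\<forall>\<Phi> :: ('a \<Rightarrow> complex) \<Rightarrow> complex.
        ((\<forall>f\<in>Apre. \<forall>g\<in>Apre. \<Phi> (\<lambda>x. f x + g x) = \<Phi> f + \<Phi> g)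
         \<and> (\<forall>f\<in>Apre. \<forall>c. \<Phi> (\<lambda>x. c * f x) = c * \<Phi> f)
         \<and> (\<exists>K. \<forall>f\<in>Apre. cmod (\<Phi> f) \<le> K * dual_norm f))
        \<longrightarrow> (\<exists>a. \<forall>f\<in>Apre. \<Phi> f = f a))"

definition weak_topology_by :: "('b \<Rightarrow> complex) set \<Rightarrow> 'b topology" where
  "weak_topology_by F =
     topology_generated_by ({UNIV} \<union> {{x. \<Phi> x \<in> U} | \<Phi> U. \<Phi> \<in> F \<and> open U})"

abbreviation weak_star_top :: "('a::complex_banach_algebra \<Rightarrow> complex) set \<Rightarrow> 'a topology" where
  "weak_star_top Apre \<equiv> weak_topology_by Apre"

definition bidual_space :: "(('a::complex_banach_algebra \<Rightarrow> complex) \<Rightarrow> complex) set" where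
  "bidual_space = {\<Phi>.
      (\<forall>f\<in>dual_space. \<forall>g\<in>dual_space. \<Phi> (\<lambda>x. f x + g x) = \<Phi> f + \<Phi> g)
    \<and> (\<forall>f\<in>dual_space. \<forall>c. \<Phi> (\<lambda>x. c * f x) = c * \<Phi> f)
    \<and> (\<exists>K. \<forall>f\<in>dual_space. cmod (\<Phi> f) \<le> K * dual_norm f)}"

definition swc_dual :: "('a::complex_banach_algebra \<Rightarrow> complex) set \<Rightarrow> ('a \<Rightarrow> complex) set" where
  "swc_dual Apre = {f \<in> dual_space.
      continuous_map (weak_star_top Apre) (subtopology (weak_topology_by bidual_space) dual_space)
        (\<lambda>a. fact_l a f)
    \<and> continuous_map (weak_star_top Apre) (subtopology (weak_topology_by bidual_space) dual_space)
        (\<lambda>a. fact_r f a)}"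

text \<open>(A \<hat>\<otimes> A)^* is identified (isometrically) with the bounded complex bilinear
  forms on A x A, with norm sup over the product of unit balls.\<close>

definition bil_dual :: "('a::complex_banach_algebra \<Rightarrow> 'a \<Rightarrow> complex) set" where
  "bil_dual = {T. (\<forall>b. clinear_functional (\<lambda>c. T b c)) \<and> (\<forall>c. clinear_functional (\<lambda>b. T b c))
                 \<and> (\<exists>K. \<forall>b c. cmod (T b c) \<le> K * norm b * norm c)}"

definition bil_norm :: "('a::complex_banach_algebra \<Rightarrow> 'a \<Rightarrow> complex) \<Rightarrow> real" where
  "bil_norm T = Sup {cmod (T b c) | b c. norm b \<le> 1 \<and> norm c \<le> 1}"

text \<open>Dual actions on (A\<hat>\<otimes>A)^*, where a.(b\<otimes>c) = ab\<otimes>c and (b\<otimes>c).a = b\<otimes>ca: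
  (T.a)(b,c) = T(ab,c),  (a.T)(b,c) = T(b,ca).\<close>

definition tact_r :: "('a::complex_banach_algebra \<Rightarrow> 'a \<Rightarrow> complex) \<Rightarrow> 'a \<Rightarrow> ('a \<Rightarrow> 'a \<Rightarrow> complex)" where
  "tact_r T a = (\<lambda>b c. T (a * b) c)"

definition tact_l :: "'a::complex_banach_algebra \<Rightarrow> ('a \<Rightarrow> 'a \<Rightarrow> complex) \<Rightarrow> ('a \<Rightarrow> 'a \<Rightarrow> complex)" where
  "tact_l a T = (\<lambda>b c. T b (c * a))"

definition bil_bidual :: "(('a::complex_banach_algebra \<Rightarrow> 'a \<Rightarrow> complex) \<Rightarrow> complex) set" where
  "bil_bidual = {m.
      (\<forall>S\<in>bil_dual. \<forall>T\<in>bil_dual. m (\<lambda>b c. S b c + T b c) = m S + m T)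
    \<and> (\<forall>T\<in>bil_dual. \<forall>z. m (\<lambda>b c. z * T b c) = z * m T)
    \<and> (\<exists>K. \<forall>T\<in>bil_dual. cmod (m T) \<le> K * bil_norm T)}"

definition swc_bil_dual :: "('a::complex_banach_algebra \<Rightarrow> complex) set \<Rightarrow> ('a \<Rightarrow> 'a \<Rightarrow> complex) set" where
  "swc_bil_dual Apre = {T \<in> bil_dual.
      continuous_map (weak_star_top Apre) (subtopology (weak_topology_by bil_bidual) bil_dual)
        (\<lambda>a. tact_l a T)
    \<and> continuous_map (weak_star_top Apre) (subtopology (weak_topology_by bil_bidual) bil_dual)
        (\<lambda>a. tact_r T a)}"

text \<open>i_{A_*}^* \<pi>_A^{**}(m), viewed as an element of A = (A_*)^*: the unique x with
  f x = <\<pi>_A^* f, m> = m((b,c) |-> f(bc)) for all f in A_*.\<close>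

definition diag_image :: "('a::complex_banach_algebra \<Rightarrow> complex) set \<Rightarrow> (('a \<Rightarrow> 'a \<Rightarrow> complex) \<Rightarrow> complex) \<Rightarrow> 'a" where
  "diag_image Apre m = (THE x. \<forall>f\<in>Apre. f x = m (\<lambda>b c. f (b * c)))"

text \<open>A net (m_\<alpha>) in (A\<hat>\<otimes>A)^{**} is encoded
  as a proper filter F on (A\<hat>\<otimes>A)^{**} (nets and proper filters give the same
  notion of "there is a net such that ..."): eventually m is in the bidual and
  satisfies <T, a.m> = <T, m.a> for T in sigma wc, i.e. m(T.a) = m(a.T); and
  diag_image m * a \<rightarrow> a in norm for all a.\<close>

definition Johnson_pseudo_Connes_amenable :: "('a::complex_banach_algebra \<Rightarrow> complex) set \<Rightarrow> bool" where
  "Johnson_pseudo_Connes_amenable Apre \<longleftrightarrow>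
     (\<exists>F :: (('a \<Rightarrow> 'a \<Rightarrow> complex) \<Rightarrow> complex) filter.
        F \<noteq> bot
      \<and> (\<forall>\<^sub>F m in F. m \<in> bil_bidual
           \<and> (\<forall>a. \<forall>T\<in>swc_bil_dual Apre. m (tact_r T a) = m (tact_l a T)))
      \<and> (\<forall>a. ((\<lambda>m. diag_image Apre m * a) \<longlongrightarrow> a) F))"

definition character :: "('a::complex_banach_algebra \<Rightarrow> complex) \<Rightarrow> bool" where
  "character \<phi> \<longleftrightarrow> clinear_functional \<phi> \<and> (\<forall>a b. \<phi> (a * b) = \<phi> a * \<phi> b) \<and> (\<exists>a. \<phi> a \<noteq> 0)"

definition weak_star_continuous_character ::
    "('a::complex_banach_algebra \<Rightarrow> complex) set \<Rightarrow> ('a \<Rightarrow> complex) \<Rightarrow> bool" where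
  "weak_star_continuous_character Apre \<phi> \<longleftrightarrow>
     character \<phi> \<and> continuous_map (weak_star_top Apre) euclidean \<phi>"

definition phi_Connes_amenable ::
    "('a::complex_banach_algebra \<Rightarrow> complex) set \<Rightarrow> ('a \<Rightarrow> complex) \<Rightarrow> bool" where
  "phi_Connes_amenable Apre \<phi> \<longleftrightarrow>
     (\<exists>m :: ('a \<Rightarrow> complex) \<Rightarrow> complex.
        (\<forall>f\<in>swc_dual Apre. \<forall>g\<in>swc_dual Apre. m (\<lambda>x. f x + g x) = m f + m g)
      \<and> (\<forall>f\<in>swc_dual Apre. \<forall>c. m (\<lambda>x. c * f x) = c * m f)
      \<and> (\<exists>K. \<forall>f\<in>swc_dual Apre. cmod (m f) \<le> K * dual_norm f)
      \<and> m \<phi> = 1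
      \<and> (\<forall>a. \<forall>f\<in>swc_dual Apre. m (fact_r f a) = \<phi> a * m f))"

end

theory Submission
  imports Defs
begin

lemma clf_add: "clinear_functional f \<Longrightarrow> f (x + y) = f x + f y"
  by (simp add: clinear_functional_def)

lemma clf_scaleC: "clinear_functional f \<Longrightarrow> f (scaleC c x) = c * f x"
  by (simp add: clinear_functional_def)

lemma clf_zero: "clinear_functional f \<Longrightarrow> f 0 = 0"
proof -
  assume a: "clinear_functional f"
  have "f (0 + 0) = f 0 + f 0" by (rule clf_add[OF a])
  then show ?thesis by simp
qed

lemma clf_neg: "clinear_functional f \<Longrightarrow> f (- x) = - f x"
proof -
  assume a: "clinear_functional f"
  have "f (x + - x) = f x + f (- x)" by (rule clf_add[OF a])
  then show ?thesis using clf_zero[OF a] by (simp add: eq_neg_iff_add_eq_0 add.commute)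
qed

lemma clf_diff: "clinear_functional f \<Longrightarrow> f (x - y) = f x - f y"
  using clf_add[of f x "- y"] clf_neg[of f y] by simp

lemma clf_scaleR: "clinear_functional f \<Longrightarrow> f (scaleR r x) = of_real r * f x"
  by (metis clf_scaleC scaleC_of_real)

lemma dual_bound:
  assumes "f \<in> dual_space" shows "\<exists>K\<ge>0. \<forall>x. cmod (f x) \<le> K * norm x"
proof -
  obtain K where K: "\<forall>x. cmod (f x) \<le> K * norm x" using assms by (auto simp: dual_space_def)
  have "\<forall>x. cmod (f x) \<le> max K 0 * norm x"
    by (metis K max.cobounded1 mult_right_mono norm_ge_zero order.trans)
  then show ?thesis by (intro exI[of _ "max K 0"]) auto
qed

lemma dual_linear: "f \<in> dual_space \<Longrightarrow> clinear_functional f"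
  by (simp add: dual_space_def)

lemma dual_bdd:
  assumes "f \<in> dual_space" shows "bdd_above {cmod (f x) | x. norm x \<le> (1::real)}"
proof -
  obtain K where K: "K \<ge> 0" "\<forall>x. cmod (f x) \<le> K * norm x" using dual_bound[OF assms] by blast
  have "cmod (f x) \<le> K" if "norm x \<le> 1" for x
    using K(2)[rule_format, of x] mult_left_mono[OF that K(1)] by simp
  then show ?thesis by (intro bdd_aboveI) auto
qed

lemma dual_norm_ge:
  assumes "f \<in> dual_space" "norm x \<le> 1" shows "cmod (f x) \<le> dual_norm f"
  unfolding dual_norm_def using assms by (auto intro!: cSup_upper dual_bdd)

lemma dual_norm_nonneg: "f \<in> dual_space \<Longrightarrow> 0 \<le> dual_norm f"
  using dual_norm_ge[of f 0] by (metis norm_ge_zero norm_zero order_trans zero_le_one)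

lemma dual_norm_zero: "dual_norm (\<lambda>_::'a::complex_banach_algebra. 0) = 0"
proof -
  have "{cmod ((\<lambda>_::'a. 0::complex) x) | x. norm x \<le> (1::real)} = {0}"
    by (auto intro: exI[of _ 0])
  then show ?thesis unfolding dual_norm_def by simp
qed

definition tensf :: "('a \<Rightarrow> complex) \<Rightarrow> ('a \<Rightarrow> complex) \<Rightarrow> 'a \<Rightarrow> 'a \<Rightarrow> complex" where
  "tensf f g = (\<lambda>b c. f b * g c)"

lemma bil_dualI:
  assumes "\<And>b. clinear_functional (\<lambda>c. T b c)" "\<And>c. clinear_functional (\<lambda>b. T b c)"
    "\<And>b c. cmod (T b c) \<le> K * norm b * norm c"
  shows "T \<in> bil_dual"
  using assms unfolding bil_dual_def by blast

lemma tensf_bil: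
  assumes f: "f \<in> dual_space" and g: "g \<in> dual_space"
  shows "tensf f g \<in> bil_dual"
proof -
  obtain K1 where K1: "K1 \<ge> 0" "\<forall>x. cmod (f x) \<le> K1 * norm x" using dual_bound[OF f] by blast
  obtain K2 where K2: "K2 \<ge> 0" "\<forall>x. cmod (g x) \<le> K2 * norm x" using dual_bound[OF g] by blast
  have lf: "clinear_functional f" and lg: "clinear_functional g" using f g dual_linear by auto
  show ?thesis
  proof (rule bil_dualI[where K = "K1 * K2"])
    fix b show "clinear_functional (\<lambda>c. tensf f g b c)"
      using lg by (simp add: tensf_def clinear_functional_def algebra_simps)
  next
    fix c show "clinear_functional (\<lambda>b. tensf f g b c)"
      using lf by (simp add: tensf_def clinear_functional_def algebra_simps)
  next
    fix b c
    have "cmod (tensf f g b c) = cmod (f b) * cmod (g c)" by (simp add: tensf_def norm_mult)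
    also have "\<dots> \<le> (K1 * norm b) * (K2 * norm c)"
      using K1 K2 by (intro mult_mono) auto
    finally show "cmod (tensf f g b c) \<le> K1 * K2 * norm b * norm c" by (simp add: algebra_simps)
  qed
qed

lemma bil_norm_le:
  assumes "\<And>b c. norm b \<le> 1 \<Longrightarrow> norm c \<le> 1 \<Longrightarrow> cmod (T b c) \<le> M"
  shows "bil_norm T \<le> M"
  unfolding bil_norm_def
proof (rule cSup_least)
  show "{cmod (T b c) |b c. norm b \<le> 1 \<and> norm c \<le> 1} \<noteq> {}" by (auto intro!: exI[of _ "0::'a"])
qed (use assms in blast)

lemma bil_norm_nonneg:
  assumes "T \<in> bil_dual" shows "0 \<le> bil_norm T"
proof -
  obtain K where K: "\<forall>b c. cmod (T b c) \<le> K * norm b * norm c" using assms by (auto simp: bil_dual_def)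
  have "cmod (T b c) \<le> max K 0" if "norm b \<le> 1" "norm c \<le> 1" for b c
  proof -
    have "cmod (T b c) \<le> max K 0 * norm b * norm c"
      using K[rule_format, of b c]
      by (smt (verit) mult_nonneg_nonneg mult_right_mono norm_ge_zero max.cobounded1)
    also have "\<dots> \<le> max K 0" using that
      by (metis max.cobounded2 mult.assoc mult_left_le mult_le_one norm_ge_zero)
    finally show ?thesis .
  qed
  then have bdd: "bdd_above {cmod (T b c) | b c. norm b \<le> 1 \<and> norm c \<le> (1::real)}"
    by (intro bdd_aboveI) auto
  have "cmod (T 0 0) \<le> bil_norm T" unfolding bil_norm_def
    by (rule cSup_upper[OF _ bdd]) (auto intro!: exI[of _ "0::'a"])
  then show ?thesis using norm_ge_zero order_trans by blast
qed

lemma bil_norm_tensf: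
  assumes f: "f \<in> dual_space" and g: "g \<in> dual_space"
  shows "bil_norm (tensf f g) \<le> dual_norm f * dual_norm g"
proof (rule bil_norm_le)
  fix b c :: 'a assume "norm b \<le> 1" "norm c \<le> 1"
  then show "cmod (tensf f g b c) \<le> dual_norm f * dual_norm g"
    unfolding tensf_def norm_mult
    by (intro mult_mono dual_norm_ge dual_norm_nonneg f g) auto
qed

lemma multf_bil:
  assumes f: "f \<in> dual_space"
  shows "(\<lambda>b c. f (b * c)) \<in> bil_dual"
proof -
  obtain K where K: "K \<ge> 0" "\<forall>x. cmod (f x) \<le> K * norm x" using dual_bound[OF f] by blast
  have lf: "clinear_functional f" using f dual_linear by auto
  show ?thesis
  proof (rule bil_dualI[where K = K])
    fix b show "clinear_functional (\<lambda>c. f (b * c))"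
      using lf by (simp add: clinear_functional_def distrib_left mult_scaleC_right)
  next
    fix c show "clinear_functional (\<lambda>b. f (b * c))"
      using lf by (simp add: clinear_functional_def distrib_right mult_scaleC_left)
  next
    fix b c :: 'a
    have "cmod (f (b * c)) \<le> K * norm (b * c)" using K by blast
    also have "\<dots> \<le> K * (norm b * norm c)" using K(1) norm_mult_ineq mult_left_mono by blast
    finally show "cmod (f (b * c)) \<le> K * norm b * norm c" by (simp add: mult.assoc)
  qed
qed

lemma bil_norm_multf:
  assumes f: "f \<in> dual_space"
  shows "bil_norm (\<lambda>b c. f (b * c)) \<le> dual_norm f"
proof (rule bil_norm_le)
  fix b c :: 'a assume "norm b \<le> 1" "norm c \<le> 1"
  then have "norm (b * c) \<le> 1"
    by (meson mult_le_one norm_ge_zero norm_mult_ineq order_trans)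
  then show "cmod (f (b * c)) \<le> dual_norm f" by (rule dual_norm_ge[OF f])
qed

lemma bil_bidual_bound:
  assumes "m \<in> bil_bidual" shows "\<exists>K\<ge>0. \<forall>T\<in>bil_dual. cmod (m T) \<le> K * bil_norm T"
proof -
  obtain K where K: "\<forall>T\<in>bil_dual. cmod (m T) \<le> K * bil_norm T" using assms by (auto simp: bil_bidual_def)
  have "\<forall>T\<in>bil_dual. cmod (m T) \<le> max K 0 * bil_norm T"
    by (metis K bil_norm_nonneg max.cobounded1 mult_right_mono order.trans)
  then show ?thesis by (intro exI[of _ "max K 0"]) auto
qed

lemma bil_bidual_add: "m \<in> bil_bidual \<Longrightarrow> S \<in> bil_dual \<Longrightarrow> T \<in> bil_dual \<Longrightarrow>
   m (\<lambda>b c. S b c + T b c) = m S + m T"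
  by (simp add: bil_bidual_def)

lemma bil_bidual_scale: "m \<in> bil_bidual \<Longrightarrow> T \<in> bil_dual \<Longrightarrow>
   m (\<lambda>b c. z * T b c) = z * m T"
  by (simp add: bil_bidual_def)

lemma topspace_weak[simp]: "topspace (weak_topology_by F) = UNIV"
  unfolding weak_topology_by_def topology_generated_by_topspace by auto

lemma weak_cont_eval:
  assumes "\<Phi> \<in> F" shows "continuous_map (weak_topology_by F) euclidean \<Phi>"
  unfolding continuous_map_def
proof (intro conjI allI impI)
  fix U :: "complex set" assume "openin euclidean U"
  then have "open U" by simp
  then have "{x. \<Phi> x \<in> U} \<in> ({UNIV} \<union> {{x. \<Phi> x \<in> U} | \<Phi> U. \<Phi> \<in> F \<and> open U})"
    using assms by blast
  then have "openin (weak_topology_by F) {x. \<Phi> x \<in> U}"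
    unfolding weak_topology_by_def by (rule topology_generated_by_Basis)
  then show "openin (weak_topology_by F) {x \<in> topspace (weak_topology_by F). \<Phi> x \<in> U}" by simp
qed auto

lemma weak_cont_into:
  assumes "\<And>\<Phi>. \<Phi> \<in> F \<Longrightarrow> continuous_map X euclidean (\<lambda>x. \<Phi> (g x))"
  shows "continuous_map X (weak_topology_by F) g"
  unfolding weak_topology_by_def
proof (rule continuous_on_generated_topo)
  fix U assume "U \<in> {UNIV} \<union> {{x. \<Phi> x \<in> U} | \<Phi> U. \<Phi> \<in> F \<and> open U}"
  then show "openin X (g -` U \<inter> topspace X)"
  proof
    assume "U \<in> {UNIV}" then show ?thesis by simp
  next
    assume "U \<in> {{x. \<Phi> x \<in> U} | \<Phi> U. \<Phi> \<in> F \<and> open U}"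
    then obtain \<Phi> V where U: "U = {x. \<Phi> x \<in> V}" "\<Phi> \<in> F" "open V" by blast
    have "openin X {x \<in> topspace X. \<Phi> (g x) \<in> V}"
      using assms[OF U(2)] U(3) unfolding continuous_map_def by simp
    moreover have "g -` U \<inter> topspace X = {x \<in> topspace X. \<Phi> (g x) \<in> V}" using U by auto
    ultimately show ?thesis by simp
  qed
qed auto

lemma weak_nbhd:
  fixes F :: "('b \<Rightarrow> complex) set"
  assumes "openin (weak_topology_by F) U" "x \<in> U"
  shows "\<exists>G. finite G \<and> G \<subseteq> F \<and> (\<exists>e>0. \<forall>y. (\<forall>f\<in>G. cmod (f y - f x) < e) \<longrightarrow> y \<in> U)"
proof -
  have "generate_topology_on ({UNIV} \<union> {{x. \<Phi> x \<in> U} | \<Phi> U. \<Phi> \<in> F \<and> open U}) U"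
    using assms(1) unfolding weak_topology_by_def by (rule openin_topology_generated_by)
  then show ?thesis using assms(2)
  proof (induction arbitrary: x)
    case Empty then show ?case by simp
  next
    case (Int a b)
    obtain G1 e1 where 1: "finite G1" "G1 \<subseteq> F" "e1 > 0" "\<forall>y. (\<forall>f\<in>G1. cmod (f y - f x) < e1) \<longrightarrow> y \<in> a"
      using Int.IH(1)[of x] Int.prems by blast
    obtain G2 e2 where 2: "finite G2" "G2 \<subseteq> F" "e2 > 0" "\<forall>y. (\<forall>f\<in>G2. cmod (f y - f x) < e2) \<longrightarrow> y \<in> b"
      using Int.IH(2)[of x] Int.prems by blast
    show ?case
      apply (rule exI[of _ "G1 \<union> G2"])
      using 1 2 by (intro conjI exI[of _ "min e1 e2"]) auto
  next
    case (UN K)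
    then obtain k where "k \<in> K" "x \<in> k" by blast
    then show ?case using UN.IH[of k x] by blast
  next
    case (Basis s)
    from Basis.hyps show ?case
    proof
      assume "s \<in> {UNIV}" then show ?thesis by (intro exI[of _ "{}"]) (auto intro: exI[of _ 1])
    next
      assume "s \<in> {{x. \<Phi> x \<in> U} | \<Phi> U. \<Phi> \<in> F \<and> open U}"
      then obtain \<Phi> V where s: "s = {x. \<Phi> x \<in> V}" "\<Phi> \<in> F" "open V" by blast
      then have "\<Phi> x \<in> V" using Basis.prems by simp
      then obtain e where e: "e > 0" "ball (\<Phi> x) e \<subseteq> V" using s(3) open_contains_ball by blast
      show ?thesis
      proof (intro exI[of _ "{\<Phi>}"] conjI exI[of _ e] allI impI)
        fix y assume "\<forall>f\<in>{\<Phi>}. cmod (f y - f x) < e"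
        then have "\<Phi> y \<in> ball (\<Phi> x) e" by (simp add: dist_norm norm_minus_commute)
        then show "y \<in> s" using e s by auto
      qed (use s e in auto)
    qed
  qed
qed

lemma kernel_span:
  fixes G :: "('a::complex_banach_algebra \<Rightarrow> complex) set"
  assumes "finite G"
  shows "G \<subseteq> Apre \<Longrightarrow> (\<forall>g\<in>G. clinear_functional g) \<Longrightarrow> (\<lambda>_. 0) \<in> Apre
    \<Longrightarrow> (\<forall>f\<in>Apre. \<forall>g\<in>Apre. (\<lambda>x. f x + g x) \<in> Apre) \<Longrightarrow> (\<forall>f\<in>Apre. \<forall>c. (\<lambda>x. c * f x) \<in> Apre)
    \<Longrightarrow> clinear_functional \<phi> \<Longrightarrow> (\<forall>y. (\<forall>f\<in>G. f y = 0) \<longrightarrow> \<phi> y = 0) \<Longrightarrow> \<phi> \<in> Apre"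
  using assms
proof (induction G arbitrary: \<phi> rule: finite_induct)
  case empty
  then have "\<phi> = (\<lambda>_. 0)" by auto
  then show ?case using empty by simp
next
  case (insert g G)
  show ?case
  proof (cases "\<forall>y. (\<forall>f\<in>G. f y = 0) \<longrightarrow> g y = 0")
    case True
    show ?thesis
      by (rule insert.IH) (use insert.prems True in auto)
  next
    case False
    then obtain y0 where y0: "\<forall>f\<in>G. f y0 = 0" "g y0 \<noteq> 0" by blast
    have lg: "clinear_functional g" and lG: "\<forall>f\<in>G. clinear_functional f"
      and lp: "clinear_functional \<phi>" using insert.prems by auto
    define c where "c = \<phi> y0 / g y0"
    define \<psi> where "\<psi> = (\<lambda>y. \<phi> y - c * g y)"
    have l\<psi>: "clinear_functional \<psi>"
      using lg lp unfolding \<psi>_def clinear_functional_def by (auto simp: algebra_simps)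
    have psiA: "\<psi> \<in> Apre"
    proof (rule insert.IH)
      show "\<forall>y. (\<forall>f\<in>G. f y = 0) \<longrightarrow> \<psi> y = 0"
      proof (intro allI impI)
        fix y assume yG: "\<forall>f\<in>G. f y = 0"
        define z where "z = y - scaleC (g y / g y0) y0"
        have "f z = 0" if "f \<in> G" for f
          using yG y0 that lG clf_diff[of f y] clf_scaleC[of f] unfolding z_def by auto
        moreover have "g z = 0"
          using y0 clf_diff[OF lg] clf_scaleC[OF lg] unfolding z_def by auto
        ultimately have "\<phi> z = 0" using insert.prems by auto
        then have "\<phi> y = (g y / g y0) * \<phi> y0"
          using clf_diff[OF lp] clf_scaleC[OF lp] unfolding z_def by auto
        then show "\<psi> y = 0" unfolding \<psi>_def c_def using y0 by (simp add: field_simps)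
      qed
    qed (use insert.prems l\<psi> in auto)
    moreover have "g \<in> Apre" using insert.prems by auto
    then have cgA: "(\<lambda>x. c * g x) \<in> Apre" using insert.prems by auto
    have "(\<lambda>x. \<psi> x + c * g x) \<in> Apre" using insert.prems(4)[rule_format, OF psiA cgA] by simp
    moreover have "(\<lambda>x. \<psi> x + c * g x) = \<phi>" unfolding \<psi>_def by auto
    ultimately show ?thesis by simp
  qed
qed

lemma phi_in_Apre:
  assumes D: "dual_Banach_algebra Apre" and W: "weak_star_continuous_character Apre \<phi>"
  shows "\<phi> \<in> Apre"
proof -
  have ch: "character \<phi>" and ct: "continuous_map (weak_star_top Apre) euclidean \<phi>"
    using W by (auto simp: weak_star_continuous_character_def)
  have lp: "clinear_functional \<phi>" using ch by (simp add: character_def)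
  have sub: "Apre \<subseteq> dual_space" using D by (simp add: dual_Banach_algebra_def)
  have "openin (weak_star_top Apre) {x \<in> topspace (weak_star_top Apre). \<phi> x \<in> ball 0 1}"
    using ct unfolding continuous_map_def by (meson open_ball open_openin)
  then have op: "openin (weak_star_top Apre) {x. \<phi> x \<in> ball 0 1}" by simp
  have "0 \<in> {x. \<phi> x \<in> ball 0 1}" using clf_zero[OF lp] by simp
  from weak_nbhd[OF op this] obtain G e where Ge: "finite G" "G \<subseteq> Apre" "e > 0"
    "\<forall>y. (\<forall>f\<in>G. cmod (f y - f 0) < e) \<longrightarrow> \<phi> y \<in> ball 0 1" by blast
  have lG: "\<forall>g\<in>G. clinear_functional g" using Ge(2) sub dual_linear by blast
  have ker: "\<forall>y. (\<forall>f\<in>G. f y = 0) \<longrightarrow> \<phi> y = 0"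
  proof (intro allI impI)
    fix y assume yG: "\<forall>f\<in>G. f y = 0"
    show "\<phi> y = 0"
    proof (rule ccontr)
      assume nz: "\<phi> y \<noteq> 0"
      define t where "t = 2 / cmod (\<phi> y)"
      have "\<forall>f\<in>G. cmod (f (scaleR t y) - f 0) < e"
        using yG lG Ge(3) clf_scaleR clf_zero by fastforce
      then have "\<phi> (scaleR t y) \<in> ball 0 1" using Ge(4) by blast
      moreover have "cmod (\<phi> (scaleR t y)) = 2"
        using nz unfolding clf_scaleR[OF lp] t_def by (simp add: norm_mult norm_divide)
      ultimately show False by simp
    qed
  qed
  show ?thesis
    by (rule kernel_span[OF Ge(1) Ge(2) lG _ _ _ lp ker]) (use D in \<open>auto simp: dual_Banach_algebra_def\<close>)
qed

lemma diag_image_eq: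
  assumes D: "dual_Banach_algebra Apre" and m: "m \<in> bil_bidual" and f: "f \<in> Apre"
  shows "f (diag_image Apre m) = m (\<lambda>b c. f (b * c))"
proof -
  have sub: "Apre \<subseteq> dual_space" using D by (simp add: dual_Banach_algebra_def)
  let ?P = "\<lambda>x. \<forall>f\<in>Apre. f x = m (\<lambda>b c. f (b * c))"
  obtain K where K: "K \<ge> 0" "\<forall>T\<in>bil_dual. cmod (m T) \<le> K * bil_norm T"
    using bil_bidual_bound[OF m] by blast
  have ex: "\<exists>x. ?P x"
  proof -
    have rep: "\<forall>\<Phi> :: ('a \<Rightarrow> complex) \<Rightarrow> complex.
        ((\<forall>f\<in>Apre. \<forall>g\<in>Apre. \<Phi> (\<lambda>x. f x + g x) = \<Phi> f + \<Phi> g)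
         \<and> (\<forall>f\<in>Apre. \<forall>c. \<Phi> (\<lambda>x. c * f x) = c * \<Phi> f)
         \<and> (\<exists>K. \<forall>f\<in>Apre. cmod (\<Phi> f) \<le> K * dual_norm f))
        \<longrightarrow> (\<exists>a. \<forall>f\<in>Apre. \<Phi> f = f a)"
      using D unfolding dual_Banach_algebra_def by blast
    have "\<exists>a. \<forall>f\<in>Apre. m (\<lambda>b c. f (b * c)) = f a"
    proof (rule rep[rule_format], intro conjI ballI allI)
      fix f g assume "f \<in> Apre" "g \<in> Apre"
      then show "m (\<lambda>b c. f (b * c) + g (b * c)) = m (\<lambda>b c. f (b * c)) + m (\<lambda>b c. g (b * c))"
        using bil_bidual_add[OF m multf_bil multf_bil] sub by blast
    next
      fix f c assume "f \<in> Apre"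
      then show "m (\<lambda>b d. c * f (b * d)) = c * m (\<lambda>b d. f (b * d))"
        using bil_bidual_scale[OF m multf_bil] sub by blast
    next
      show "\<exists>K. \<forall>f\<in>Apre. cmod (m (\<lambda>b c. f (b * c))) \<le> K * dual_norm f"
      proof (intro exI ballI)
        fix f assume "f \<in> Apre"
        then have fd: "f \<in> dual_space" using sub by blast
        have "cmod (m (\<lambda>b c. f (b * c))) \<le> K * bil_norm (\<lambda>b c. f (b * c))"
          using K(2) multf_bil[OF fd] by blast
        also have "\<dots> \<le> K * dual_norm f" using bil_norm_multf[OF fd] K(1) mult_left_mono by blast
        finally show "cmod (m (\<lambda>b c. f (b * c))) \<le> K * dual_norm f" .
      qed
    qed
    then show ?thesis by metis
  qed
  have uniq: "x = y" if "?P x" "?P y" for x y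
  proof -
    have z: "\<forall>f\<in>Apre. f (x - y) = 0"
      using that sub dual_linear clf_diff by (metis (no_types, lifting) subsetD right_minus_eq)
    have "norm (x - y) = Sup {cmod (f (x - y)) | f. f \<in> Apre \<and> dual_norm f \<le> 1}"
      using D unfolding dual_Banach_algebra_def by blast
    also have "{cmod (f (x - y)) | f. f \<in> Apre \<and> dual_norm f \<le> 1} = {0}"
    proof -
      have "(\<lambda>_. 0) \<in> Apre" using D by (simp add: dual_Banach_algebra_def)
      then show ?thesis using z dual_norm_zero[where 'a='a] by (auto intro!: exI[of _ "\<lambda>_. 0"])
    qed
    finally show ?thesis by simp
  qed
  have "?P (diag_image Apre m)" unfolding diag_image_def
    by (rule theI') (use ex uniq in blast)
  then show ?thesis using f by blast
qed

lemma cmap_mult_const: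
  assumes "continuous_map X euclidean (f :: 'b \<Rightarrow> complex)" shows "continuous_map X euclidean (\<lambda>x. f x * c)"
proof -
  have "continuous_map euclidean euclidean (\<lambda>z::complex. z * c)"
    using continuous_map_iff_continuous[of UNIV "\<lambda>z::complex. z * c"] by (simp add: continuous_intros)
  from continuous_map_compose[OF assms this] show ?thesis by (simp add: o_def)
qed

lemma bil_scale: 
  assumes "T \<in> bil_dual" shows "(\<lambda>b c. z * T b c) \<in> bil_dual"
proof -
  obtain K where K: "\<forall>b c. cmod (T b c) \<le> K * norm b * norm c"
    and l1: "\<forall>b. clinear_functional (\<lambda>c. T b c)" and l2: "\<forall>c. clinear_functional (\<lambda>b. T b c)"
    using assms by (auto simp: bil_dual_def)
  show ?thesis
  proof (rule bil_dualI[where K = "cmod z * K"])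
    fix b show "clinear_functional (\<lambda>c. z * T b c)"
      using l1 unfolding clinear_functional_def by (simp add: distrib_left mult.left_commute)
  next
    fix c show "clinear_functional (\<lambda>b. z * T b c)"
      using l2 unfolding clinear_functional_def by (simp add: distrib_left mult.left_commute)
  next
    fix b c
    have "cmod (T b c) \<le> K * norm b * norm c" using K by blast
    then have "cmod z * cmod (T b c) \<le> cmod z * (K * norm b * norm c)"
      by (rule mult_left_mono) simp
    then show "cmod (z * T b c) \<le> cmod z * K * norm b * norm c" using norm_mult[of z "T b c"] by (simp add: mult.assoc)
  qed
qed

lemma tensf_add: "tensf (\<lambda>x. f x + g x) h = (\<lambda>b c. tensf f h b c + tensf g h b c)"
  by (simp add: tensf_def algebra_simps)

lemma tensf_scale: "tensf (\<lambda>x. z * f x) h = (\<lambda>b c. z * tensf f h b c)"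
  by (simp add: tensf_def algebra_simps)

lemma Psi_bidual:
  assumes \<Phi>: "\<Phi> \<in> bil_bidual" and h: "h \<in> dual_space"
  shows "(\<lambda>g. \<Phi> (tensf g h)) \<in> bidual_space"
proof -
  obtain K where K: "K \<ge> 0" "\<forall>T\<in>bil_dual. cmod (\<Phi> T) \<le> K * bil_norm T"
    using bil_bidual_bound[OF \<Phi>] by blast
  have "cmod (\<Phi> (tensf g h)) \<le> (K * dual_norm h) * dual_norm g" if g: "g \<in> dual_space" for g
  proof -
    have "cmod (\<Phi> (tensf g h)) \<le> K * bil_norm (tensf g h)" using K(2) tensf_bil[OF g h] by blast
    also have "\<dots> \<le> K * (dual_norm g * dual_norm h)"
      using bil_norm_tensf[OF g h] K(1) mult_left_mono by blast
    finally show ?thesis by (simp add: algebra_simps)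
  qed
  moreover have "\<Phi> (tensf (\<lambda>x. f x + g x) h) = \<Phi> (tensf f h) + \<Phi> (tensf g h)"
    if "f \<in> dual_space" "g \<in> dual_space" for f g
    unfolding tensf_add by (rule bil_bidual_add[OF \<Phi> tensf_bil[OF that(1) h] tensf_bil[OF that(2) h]])
  moreover have "\<Phi> (tensf (\<lambda>x. c * f x) h) = c * \<Phi> (tensf f h)"
    if "f \<in> dual_space" for f c
    unfolding tensf_scale by (rule bil_bidual_scale[OF \<Phi> tensf_bil[OF that h]])
  ultimately show ?thesis unfolding bidual_space_def by blast
qed

lemma tensf_swc:
  assumes D: "dual_Banach_algebra Apre" and W: "weak_star_continuous_character Apre \<phi>"
    and f: "f \<in> swc_dual Apre"
  shows "tensf f \<phi> \<in> swc_bil_dual Apre"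
proof -
  have ch: "character \<phi>" and ct: "continuous_map (weak_star_top Apre) euclidean \<phi>"
    using W by (auto simp: weak_star_continuous_character_def)
  have sub: "Apre \<subseteq> dual_space" using D by (simp add: dual_Banach_algebra_def)
  have \<phi>d: "\<phi> \<in> dual_space" using phi_in_Apre[OF D W] sub by blast
  have fd: "f \<in> dual_space" using f by (simp add: swc_dual_def)
  have cr: "continuous_map (weak_star_top Apre) (subtopology (weak_topology_by bidual_space) dual_space)
        (\<lambda>a. fact_r f a)" using f by (simp add: swc_dual_def)
  have T: "tensf f \<phi> \<in> bil_dual" by (rule tensf_bil[OF fd \<phi>d])
  have tl: "tact_l a (tensf f \<phi>) = (\<lambda>b c. \<phi> a * tensf f \<phi> b c)" for a
    using ch unfolding tact_l_def tensf_def character_def by (auto simp: mult_ac)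
  have tr: "tact_r (tensf f \<phi>) a = tensf (fact_r f a) \<phi>" for a
    by (simp add: tact_r_def tensf_def fact_r_def)
  have frd: "fact_r f a \<in> dual_space" for a
    using cr unfolding continuous_map_in_subtopology by auto
  have c1: "continuous_map (weak_star_top Apre) (subtopology (weak_topology_by bil_bidual) bil_dual)
        (\<lambda>a. tact_l a (tensf f \<phi>))"
    unfolding continuous_map_in_subtopology tl
  proof
    show "continuous_map (weak_star_top Apre) (weak_topology_by bil_bidual) (\<lambda>a b c. \<phi> a * tensf f \<phi> b c)"
    proof (rule weak_cont_into)
      fix \<Phi> :: "('a \<Rightarrow> 'a \<Rightarrow> complex) \<Rightarrow> complex" assume \<Phi>: "\<Phi> \<in> bil_bidual"
      have "(\<lambda>a. \<Phi> (\<lambda>b c. \<phi> a * tensf f \<phi> b c)) = (\<lambda>a. \<phi> a * \<Phi> (tensf f \<phi>))"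
        using bil_bidual_scale[OF \<Phi> T] by simp
      then show "continuous_map (weak_star_top Apre) euclidean (\<lambda>a. \<Phi> (\<lambda>b c. \<phi> a * tensf f \<phi> b c))"
        using cmap_mult_const[OF ct] by simp
    qed
  qed (use bil_scale[OF T] in auto)
  have c2: "continuous_map (weak_star_top Apre) (subtopology (weak_topology_by bil_bidual) bil_dual)
        (\<lambda>a. tact_r (tensf f \<phi>) a)"
    unfolding continuous_map_in_subtopology tr
  proof
    show "continuous_map (weak_star_top Apre) (weak_topology_by bil_bidual) (\<lambda>a. tensf (fact_r f a) \<phi>)"
    proof (rule weak_cont_into)
      fix \<Phi> :: "('a \<Rightarrow> 'a \<Rightarrow> complex) \<Rightarrow> complex" assume \<Phi>: "\<Phi> \<in> bil_bidual"
      have "continuous_map (subtopology (weak_topology_by bidual_space) dual_space) euclidean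
              (\<lambda>g. \<Phi> (tensf g \<phi>))"
        by (rule continuous_map_from_subtopology, rule weak_cont_eval, rule Psi_bidual[OF \<Phi> \<phi>d])
      from continuous_map_compose[OF cr this]
      show "continuous_map (weak_star_top Apre) euclidean (\<lambda>a. \<Phi> (tensf (fact_r f a) \<phi>))"
        by (simp add: o_def)
    qed
  qed (use tensf_bil[OF frd \<phi>d] in auto)
  show ?thesis unfolding swc_bil_dual_def by (rule CollectI, intro conjI T c1 c2)
qed

theorem proposition2p7:
  fixes Apre :: "('a::complex_banach_algebra \<Rightarrow> complex) set"
    and \<phi> :: "'a \<Rightarrow> complex"
  assumes "dual_Banach_algebra Apre"
    and "weak_star_continuous_character Apre \<phi>"
    and "Johnson_pseudo_Connes_amenable Apre"
  shows "phi_Connes_amenable Apre \<phi>"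
proof -
  note D = assms(1) and W = assms(2)
  have ch: "character \<phi>" using W by (simp add: weak_star_continuous_character_def)
  have lp: "clinear_functional \<phi>" and mp: "\<And>a b. \<phi> (a * b) = \<phi> a * \<phi> b"
    and "\<exists>a. \<phi> a \<noteq> 0" using ch by (auto simp: character_def)
  then obtain a0 where a0: "\<phi> a0 \<noteq> 0" by blast
  have sub: "Apre \<subseteq> dual_space" using D by (simp add: dual_Banach_algebra_def)
  have \<phi>A: "\<phi> \<in> Apre" by (rule phi_in_Apre[OF D W])
  have \<phi>d: "\<phi> \<in> dual_space" using \<phi>A sub by blast
  obtain K\<phi> where K\<phi>: "K\<phi> \<ge> 0" "\<forall>x. cmod (\<phi> x) \<le> K\<phi> * norm x" using dual_bound[OF \<phi>d] by blast
  have bl: "bounded_linear \<phi>"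
  proof (rule bounded_linear_intro[where K = K\<phi>])
    fix x y show "\<phi> (x + y) = \<phi> x + \<phi> y" by (rule clf_add[OF lp])
  next
    fix r x show "\<phi> (scaleR r x) = scaleR r (\<phi> x)" by (simp add: clf_scaleR[OF lp] scaleR_conv_of_real)
  next
    fix x show "norm (\<phi> x) \<le> norm x * K\<phi>" using K\<phi>(2) by (simp add: mult.commute)
  qed
  obtain F :: "(('a \<Rightarrow> 'a \<Rightarrow> complex) \<Rightarrow> complex) filter" where
    Fnb: "F \<noteq> bot" and ev: "\<forall>\<^sub>F m in F. m \<in> bil_bidual
           \<and> (\<forall>a. \<forall>T\<in>swc_bil_dual Apre. m (tact_r T a) = m (tact_l a T))"
    and lim: "\<forall>a. ((\<lambda>m. diag_image Apre m * a) \<longlongrightarrow> a) F"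
    using assms(3) unfolding Johnson_pseudo_Connes_amenable_def by blast
  have "((\<lambda>m. \<phi> (diag_image Apre m * a0)) \<longlongrightarrow> \<phi> a0) F"
    using bounded_linear.tendsto[OF bl lim[rule_format, of a0]] .
  then have "\<forall>\<^sub>F m in F. \<phi> (diag_image Apre m * a0) \<noteq> 0"
    using a0 tendsto_imp_eventually_ne by blast
  with ev have "\<forall>\<^sub>F m in F. (m \<in> bil_bidual
           \<and> (\<forall>a. \<forall>T\<in>swc_bil_dual Apre. m (tact_r T a) = m (tact_l a T))) \<and> \<phi> (diag_image Apre m * a0) \<noteq> 0"
    by (rule eventually_conj)
  then obtain m0 where m0: "m0 \<in> bil_bidual" "\<forall>a. \<forall>T\<in>swc_bil_dual Apre. m0 (tact_r T a) = m0 (tact_l a T)"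
    "\<phi> (diag_image Apre m0 * a0) \<noteq> 0"
    using eventually_happens'[OF Fnb] by blast
  define d where "d = m0 (tensf \<phi> \<phi>)"
  have "tensf \<phi> \<phi> = (\<lambda>b c. \<phi> (b * c))" by (simp add: tensf_def mp)
  then have "d = \<phi> (diag_image Apre m0)" unfolding d_def using diag_image_eq[OF D m0(1) \<phi>A] by simp
  then have dnz: "d \<noteq> 0" using m0(3) mp by simp
  obtain K0 where K0: "K0 \<ge> 0" "\<forall>T\<in>bil_dual. cmod (m0 T) \<le> K0 * bil_norm T"
    using bil_bidual_bound[OF m0(1)] by blast
  have swcd: "f \<in> dual_space" if "f \<in> swc_dual Apre" for f using that by (simp add: swc_dual_def)
  define N where "N = (\<lambda>f. m0 (tensf f \<phi>) / d)"
  show ?thesis unfolding phi_Connes_amenable_def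
  proof (intro exI[of _ N] conjI ballI allI)
    fix f g assume f: "f \<in> swc_dual Apre" and g: "g \<in> swc_dual Apre"
    show "N (\<lambda>x. f x + g x) = N f + N g"
      unfolding N_def tensf_add bil_bidual_add[OF m0(1) tensf_bil[OF swcd[OF f] \<phi>d] tensf_bil[OF swcd[OF g] \<phi>d]]
      by (simp add: add_divide_distrib)
  next
    fix f c assume f: "f \<in> swc_dual Apre"
    show "N (\<lambda>x. c * f x) = c * N f"
      unfolding N_def tensf_scale bil_bidual_scale[OF m0(1) tensf_bil[OF swcd[OF f] \<phi>d]] by simp
  next
    show "\<exists>K. \<forall>f\<in>swc_dual Apre. cmod (N f) \<le> K * dual_norm f"
    proof (intro exI ballI)
      fix f assume f: "f \<in> swc_dual Apre"
      have "cmod (m0 (tensf f \<phi>)) \<le> K0 * bil_norm (tensf f \<phi>)"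
        using K0(2) tensf_bil[OF swcd[OF f] \<phi>d] by blast
      also have "\<dots> \<le> K0 * (dual_norm f * dual_norm \<phi>)"
        using bil_norm_tensf[OF swcd[OF f] \<phi>d] K0(1) mult_left_mono by blast
      finally have "cmod (m0 (tensf f \<phi>)) / cmod d \<le> K0 * (dual_norm f * dual_norm \<phi>) / cmod d"
        using dnz by (simp add: divide_right_mono)
      then show "cmod (N f) \<le> (K0 * dual_norm \<phi> / cmod d) * dual_norm f"
        unfolding N_def by (simp add: norm_divide algebra_simps)
    qed
  next
    show "N \<phi> = 1" unfolding N_def d_def[symmetric] using dnz by simp
  next
    fix a f assume f: "f \<in> swc_dual Apre"
    have T: "tensf f \<phi> \<in> swc_bil_dual Apre" by (rule tensf_swc[OF D W f])
    have tl: "tact_l a (tensf f \<phi>) = (\<lambda>b c. \<phi> a * tensf f \<phi> b c)"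
      unfolding tact_l_def tensf_def using mp by (auto simp: mult_ac)
    have "m0 (tensf (fact_r f a) \<phi>) = m0 (tact_r (tensf f \<phi>) a)"
      by (simp add: tact_r_def tensf_def fact_r_def)
    also have "\<dots> = m0 (tact_l a (tensf f \<phi>))" using m0(2) T by blast
    also have "\<dots> = m0 (\<lambda>b c. \<phi> a * tensf f \<phi> b c)" by (simp only: tl)
    also have "\<dots> = \<phi> a * m0 (tensf f \<phi>)"
      by (rule bil_bidual_scale[OF m0(1) tensf_bil[OF swcd[OF f] \<phi>d]])
    finally show "N (fact_r f a) = \<phi> a * N f" unfolding N_def by simp
  qed
qed

end
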